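(* Let $L$ be one of the functions $x\mapsto e^{-|x|^p}$ with $p\ge1$, or $(\hbar^s)^\circ$ with $s>0$, on $\mathbb{R}^d$. Define $L_+(x)=L(x)$ if $\langle x,e_1\rangle\ge0$ and $L_+(x)=0$ if $\langle x,e_1\rangle<0$. Then $L$ is the unique Löwner function of $L_+$ with respect to $L$. Moreover, there is no position $g$ of $L$ with $(L_+)^\circ\le g$.
   Context: $e_1$ is the first standard basis vector of $\mathbb{R}^d$. The height function is $\hbar(x)=\sqrt{1-|x|^2}$ for $|x|\le1$ and $0$ otherwise. The polar function of a non-negative function $f$ is $f^\circ(p)=\inf_{\{x:f(x)>0\}}\frac{e^{-\langle p,x\rangle}}{f(x)}$. Positions of a function $w$ are the functions $\alpha\,w(Ax+a)$ with $A$ a non-singular real $d\times d$ matrix, $\alpha>0$, $a\in\mathbb{R}^d$. A Löwner function of $f$ with respect to $w$ is a position $g$ of $w$ minimizing $\int_{\mathbb{R}^d} g$ subject to $f\le g$ pointwise. *)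

theory Defs
  imports "HOL-Analysis.Analysis"
begin

text \<open>The space R^d is modelled as real^'n, with 'n a finite index type; the
  index type is well-ordered so that the "first" standard basis vector is the axis
  vector at the least index.\<close>

definition e1 :: "real ^ 'n::{finite,wellorder}" where
  "e1 = axis (LEAST i. True) 1"

definition hbar :: "real ^ 'n::finite \<Rightarrow> real" where
  "hbar x = (if norm x \<le> 1 then sqrt (1 - (norm x)\<^sup>2) else 0)"

definition polar :: "(real ^ 'n::finite \<Rightarrow> real) \<Rightarrow> real ^ 'n \<Rightarrow> real" where
  "polar f p = Inf ((\<lambda>x. exp (- (p \<bullet> x)) / f x) ` {x. f x > 0})"

definition is_position :: "(real ^ 'n::finite \<Rightarrow> real) \<Rightarrow> (real ^ 'n \<Rightarrow> real) \<Rightarrow> bool" where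
  "is_position w g \<longleftrightarrow> (\<exists>(A :: real ^ 'n ^ 'n) (\<alpha>::real) (a :: real ^ 'n).
      invertible A \<and> \<alpha> > 0 \<and> g = (\<lambda>x. \<alpha> * w (A *v x + a)))"

definition integral_R :: "(real ^ 'n::finite \<Rightarrow> real) \<Rightarrow> ennreal" where
  "integral_R g = (\<integral>\<^sup>+ x. ennreal (g x) \<partial>lborel)"

definition is_lowner :: "(real ^ 'n::finite \<Rightarrow> real) \<Rightarrow> (real ^ 'n \<Rightarrow> real) \<Rightarrow> (real ^ 'n \<Rightarrow> real) \<Rightarrow> bool" where
  "is_lowner f w g \<longleftrightarrow> is_position w g \<and> (\<forall>x. f x \<le> g x) \<and>
     (\<forall>g'. is_position w g' \<and> (\<forall>x. f x \<le> g' x) \<longrightarrow> integral_R g \<le> integral_R g')"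

end

theory Submission
  imports Defs
begin

lemma lborel_affine_matrix:
  fixes A :: "((real, 'n::{finite,wellorder}) vec, 'n) vec" and a :: "(real, 'n) vec"
  assumes A: "invertible A"
  shows "lborel = density (distr lborel borel (\<lambda>x. A *v x + a)) (\<lambda>_. ennreal \<bar>det A\<bar>)"
proof (rule lborel_eqI)
  fix l u :: "(real, 'n) vec" assume le: "\<And>b. b \<in> Basis \<Longrightarrow> l \<bullet> b \<le> u \<bullet> b"
  obtain B where AB: "A ** B = mat 1" "B ** A = mat 1" using A unfolding invertible_def by blast
  have dAB: "det A * det B = 1" using AB det_mul[of A B] by simp
  have Tm[measurable]: "(\<lambda>x. A *v x + a) \<in> borel \<rightarrow>\<^sub>M borel"
    by (intro borel_measurable_continuous_onI continuous_intros)
  have pre: "(\<lambda>x. A *v x + a) -` box l u = ((*v) B) ` ((\<lambda>y. y - a) ` box l u)"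
  proof (rule set_eqI, rule iffI)
    fix x assume "x \<in> (\<lambda>x. A *v x + a) -` box l u"
    then have "A *v x + a \<in> box l u" by simp
    moreover have "x = B *v ((A *v x + a) - a)" using AB by (simp add: matrix_vector_mul_assoc)
    ultimately show "x \<in> ((*v) B) ` ((\<lambda>y. y - a) ` box l u)" by blast
  next
    fix x assume "x \<in> ((*v) B) ` ((\<lambda>y. y - a) ` box l u)"
    then obtain y where y: "y \<in> box l u" "x = B *v (y - a)" by auto
    have "A *v x + a = y" using AB y(2) by (simp add: matrix_vector_mul_assoc)
    then show "x \<in> (\<lambda>x. A *v x + a) -` box l u" using y by simp
  qed
  have tr: "(\<lambda>y. y - a) ` box l u \<in> lmeasurable"
    by (intro measurable_translation_subtract) auto
  have mtr: "measure lebesgue ((\<lambda>y. y - a) ` box l u) = measure lebesgue (box l u)"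
    by (rule measure_translation_subtract)
  have lin: "linear ((*v) B)" by (simp add: matrix_vector_mul_linear)
  have meas: "(\<lambda>x. A *v x + a) -` box l u \<in> lmeasurable"
    unfolding pre by (rule measurable_linear_image[OF lin tr])
  have "measure lebesgue ((\<lambda>x. A *v x + a) -` box l u) = \<bar>det B\<bar> * measure lebesgue (box l u)"
    unfolding pre using measure_linear_image[OF lin tr] mtr by (simp add: matrix_of_matrix_vector_mul)
  moreover have bor: "(\<lambda>x. A *v x + a) -` box l u \<in> sets borel"
    using measurable_sets[OF Tm, of "box l u"] by simp
  ultimately have em: "emeasure lborel ((\<lambda>x. A *v x + a) -` box l u) = ennreal (\<bar>det B\<bar> * measure lebesgue (box l u))"
    using meas emeasure_eq_measure2[OF meas] by (simp add: emeasure_completion)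
  have mb: "measure lebesgue (box l u) = (\<Prod>b\<in>Basis. (u - l) \<bullet> b)"
    using le by (simp add: measure_lborel_box_eq)
  have "emeasure (density (distr lborel borel (\<lambda>x. A *v x + a)) (\<lambda>_. ennreal \<bar>det A\<bar>)) (box l u)
     = ennreal \<bar>det A\<bar> * emeasure lborel ((\<lambda>x. A *v x + a) -` box l u)"
    by (simp add: emeasure_density emeasure_distr nn_integral_cmult_indicator)
  also have "\<dots> = ennreal (\<bar>det A\<bar> * \<bar>det B\<bar> * measure lebesgue (box l u))"
    unfolding em by (simp add: ennreal_mult' mult.assoc)
  also have "\<bar>det A\<bar> * \<bar>det B\<bar> = 1" using dAB by (simp add: abs_mult[symmetric])
  finally show "emeasure (density (distr lborel borel (\<lambda>x. A *v x + a)) (\<lambda>_. ennreal \<bar>det A\<bar>)) (box l u) = (\<Prod>b\<in>Basis. (u - l) \<bullet> b)"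
    using mb by (simp add: prod_nonneg)
qed simp

lemma summable_poly_exp:
  fixes c :: real and n :: nat
  assumes c: "c > 0"
  shows "summable (\<lambda>k::nat. (2 * (real k + 1)) ^ n * exp (- c * real k))"
proof (rule summable_ratio_test[where c = "exp (- c / 2)" and N = "nat \<lceil>2 * real n / c\<rceil>"])
  show "exp (- c / 2) < 1" using c by simp
  fix k :: nat assume k: "k \<ge> nat \<lceil>2 * real n / c\<rceil>"
  then have kn: "2 * real n / c \<le> real k" by linarith
  have r: "(2 * (real (Suc k) + 1)) = (2 * (real k + 1)) * (1 + 1 / (real k + 1))"
    by (simp add: field_simps)
  have "(1 + 1 / (real k + 1)) ^ n \<le> exp (1 / (real k + 1)) ^ n"
    by (intro power_mono) (auto simp: exp_ge_add_one_self add_nonneg_nonneg)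
  also have "\<dots> = exp (real n / (real k + 1))" by (simp add: exp_of_nat_mult[symmetric])
  also have "\<dots> \<le> exp (c / 2)"
  proof -
    have "real n \<le> c / 2 * (real k + 1)" using kn c by (simp add: field_simps)
    then have "real n / (real k + 1) \<le> c / 2" by (simp add: divide_le_eq mult.commute)
    then show ?thesis by simp
  qed
  finally have pw: "(1 + 1 / (real k + 1)) ^ n \<le> exp (c / 2)" .
  have "(2 * (real (Suc k) + 1)) ^ n * exp (- c * real (Suc k))
      = (2 * (real k + 1)) ^ n * exp (- c * real k) * ((1 + 1 / (real k + 1)) ^ n * exp (- c))"
    unfolding r power_mult_distrib by (simp add: exp_add[symmetric] algebra_simps)
  also have "\<dots> \<le> (2 * (real k + 1)) ^ n * exp (- c * real k) * (exp (c / 2) * exp (- c))"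
    by (intro mult_left_mono mult_right_mono pw) auto
  also have "exp (c / 2) * exp (- c) = exp (- c / 2)" by (simp add: exp_add[symmetric])
  finally show "norm ((2 * (real (Suc k) + 1)) ^ n * exp (- c * real (Suc k)))
        \<le> exp (- c / 2) * norm ((2 * (real k + 1)) ^ n * exp (- c * real k))"
    by (simp add: mult.commute)
qed

lemma exp_norm_nn_integral_finite:
  fixes c :: real
  assumes c: "c > 0"
  shows "(\<integral>\<^sup>+x. ennreal (exp (- c * norm (x::'a::euclidean_space))) \<partial>lborel) < \<infinity>"
proof -
  define B where "B k = cbox (- ((real k + 1) *\<^sub>R One)) ((real k + 1) *\<^sub>R One :: 'a)" for k :: nat
  have gen: "(g::nat \<Rightarrow> ennreal) k \<le> suminf g" for g k
    using sum_le_suminf[OF summableI, of "{k}" g] by simp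
  have le: "ennreal (exp (- c * norm x)) \<le> (\<Sum>k. ennreal (exp (- c * real k)) * indicator (B k) x)" for x :: 'a
  proof -
    define k where "k = nat \<lfloor>norm x\<rfloor>"
    have fl: "real k = real_of_int \<lfloor>norm x\<rfloor>" unfolding k_def by simp
    have k1: "real k \<le> norm x" "norm x \<le> real k + 1" unfolding fl by linarith+
    have "x \<in> B k" unfolding B_def mem_box
    proof (intro ballI)
      fix b :: 'a assume b: "b \<in> Basis"
      have "\<bar>x \<bullet> b\<bar> \<le> real k + 1" using Basis_le_norm[OF b, of x] k1 by linarith
      then show "- ((real k + 1) *\<^sub>R One) \<bullet> b \<le> x \<bullet> b \<and> x \<bullet> b \<le> (real k + 1) *\<^sub>R One \<bullet> b"
        using b by (auto simp: abs_le_iff)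
    qed
    then have "ennreal (exp (- c * norm x)) \<le> ennreal (exp (- c * real k)) * indicator (B k) x"
      using k1 c by (simp add: indicator_def)
    also have "\<dots> \<le> (\<Sum>k. ennreal (exp (- c * real k)) * indicator (B k) x)"
      by (rule gen)
    finally show ?thesis .
  qed
  have "(\<integral>\<^sup>+x. ennreal (exp (- c * norm (x::'a))) \<partial>lborel) \<le> (\<integral>\<^sup>+x. (\<Sum>k. ennreal (exp (- c * real k)) * indicator (B k) x) \<partial>lborel)"
    using le by (intro nn_integral_mono) auto
  also have "\<dots> = (\<Sum>k. (\<integral>\<^sup>+x. ennreal (exp (- c * real k)) * indicator (B k) x \<partial>lborel))"
    by (intro nn_integral_suminf) (auto simp: B_def)
  also have "\<dots> = (\<Sum>k. ennreal ((2 * (real k + 1)) ^ DIM('a) * exp (- c * real k)))"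
  proof (intro suminf_cong)
    fix k
    have pc: "(\<Prod>b\<in>Basis. ((real k + 1) *\<^sub>R (One::'a) - (- ((real k + 1) *\<^sub>R One))) \<bullet> b) = (\<Prod>b\<in>(Basis::'a set). 2 * (real k + 1))"
      by (rule prod.cong[OF refl]) (simp add: inner_add_left inner_diff_left algebra_simps)
    have "emeasure lborel (B k) = ennreal ((2 * (real k + 1)) ^ DIM('a))"
      unfolding B_def emeasure_lborel_cbox_eq pc by (auto simp: prod_constant)
    then show "(\<integral>\<^sup>+x. ennreal (exp (- c * real k)) * indicator (B k) x \<partial>lborel) = ennreal ((2 * (real k + 1)) ^ DIM('a) * exp (- c * real k))"
      by (simp add: nn_integral_cmult_indicator B_def ennreal_mult' mult.commute)
  qed
  also have "\<dots> = ennreal (\<Sum>k. (2 * (real k + 1)) ^ DIM('a) * exp (- c * real k))"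
    by (intro suminf_ennreal2 summable_poly_exp c) auto
  also have "\<dots> < \<infinity>" by simp
  finally show ?thesis .
qed

lemma contraction_det:
  fixes A :: "((real, 'n::{finite,wellorder}) vec, 'n) vec"
  assumes contr: "\<And>u. norm (A *v u) \<le> norm u"
  shows "\<bar>det A\<bar> \<le> 1"
proof -
  have lin: "linear ((*v) A)" by simp
  have sub: "(*v) A ` ball 0 1 \<subseteq> ball 0 1"
    by (auto simp: dist_norm intro: le_less_trans[OF contr])
  have m: "measure lebesgue ((*v) A ` ball 0 1) = \<bar>det A\<bar> * measure lebesgue (ball (0::(real,'n) vec) 1)"
    using measure_linear_image[OF lin lmeasurable_ball] by simp
  have "measure lebesgue ((*v) A ` ball 0 1) \<le> measure lebesgue (ball (0::(real,'n) vec) 1)"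
    by (intro measure_mono_fmeasurable[OF sub] fmeasurableD[OF measurable_linear_image[OF lin lmeasurable_ball]] lmeasurable_ball)
  moreover have "measure lebesgue (ball (0::(real,'n) vec) 1) > 0"
    using content_ball_pos[of 1 0] by simp
  ultimately show ?thesis using m by (simp add: mult_le_cancel_right1)
qed

lemma contraction_det_isometry:
  fixes A :: "((real, 'n::{finite,wellorder}) vec, 'n) vec"
  assumes contr: "\<And>u. norm (A *v u) \<le> norm u"
    and inv: "invertible A" and d: "\<bar>det A\<bar> = 1"
  shows "norm (A *v u) = norm u"
proof (rule ccontr)
  assume ne: "norm (A *v u) \<noteq> norm u"
  then have lt: "norm (A *v u) < norm u" using contr[of u] by simp
  obtain B where AB: "A ** B = mat 1" "B ** A = mat 1" using inv unfolding invertible_def by blast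
  have BA: "B *v (A *v x) = x" for x using AB by (simp add: matrix_vector_mul_assoc)
  have AB': "A *v (B *v x) = x" for x using AB by (simp add: matrix_vector_mul_assoc)
  have Bge: "norm y \<le> norm (B *v y)" for y using contr[of "B *v y"] AB' by simp
  have u0: "u \<noteq> 0" using lt by auto
  have Au0: "A *v u \<noteq> 0" using BA[of u] u0 by auto
  define v where "v = A *v u"
  define lam where "lam = norm u / norm v"
  have lam1: "lam > 1" unfolding lam_def v_def using lt Au0 by (simp add: field_simps)
  define y0 where "y0 = ((1 + 1/lam) / 2 / norm v) *\<^sub>R v"
  have ny0: "norm y0 = (1 + 1/lam) / 2" unfolding y0_def using Au0 lam1 v_def
    by (simp add: divide_simps)
  have By0: "norm (B *v y0) = (1 + 1/lam) / 2 * lam"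
    unfolding y0_def using Au0 lam1 v_def
    by (simp add: matrix_vector_mult_scaleR BA lam_def divide_simps)
  define U where "U = {y. 1 < norm (B *v y)} \<inter> ball 0 1"
  have lin: "linear ((*v) A)" by simp
  have openU: "open U" unfolding U_def
    by (intro open_Int open_ball open_Collect_less continuous_intros)
  have i1: "(1 + 1/lam) / 2 < 1" using lam1 by (simp add: field_simps)
  have i2: "1 < (1 + 1/lam) / 2 * lam" using lam1 by (simp add: field_simps)
  have y0U: "y0 \<in> U" unfolding U_def using ny0 By0 i1 i2 by auto
  obtain r where r: "r > 0" "ball y0 r \<subseteq> U" using openU y0U open_contains_ball by blast
  have Ulm: "U \<in> lmeasurable" by (intro lmeasurable_open openU) (auto simp: U_def)
  have "0 < measure lebesgue (ball y0 r)" using content_ball_pos[OF r(1), of y0] by simp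
  also have "\<dots> \<le> measure lebesgue U" using measure_mono_fmeasurable[OF r(2) _ Ulm] by simp
  finally have Upos: "0 < measure lebesgue U" .
  have sub: "(*v) A ` ball 0 1 \<subseteq> ball 0 1 - U"
  proof
    fix y assume "y \<in> (*v) A ` ball 0 1"
    then obtain x where x: "norm x < 1" "y = A *v x" by auto
    then show "y \<in> ball 0 1 - U" using contr[of x] BA[of x] by (auto simp: U_def)
  qed
  have UB: "U \<subseteq> ball 0 1" by (auto simp: U_def)
  have "\<bar>det A\<bar> * measure lebesgue (ball (0::(real,'n) vec) 1) = measure lebesgue ((*v) A ` ball 0 1)"
    using measure_linear_image[OF lin lmeasurable_ball] by simp
  also have "\<dots> \<le> measure lebesgue (ball 0 1 - U)"
    by (intro measure_mono_fmeasurable[OF sub] fmeasurableD[OF measurable_linear_image[OF lin lmeasurable_ball]] fmeasurable_Diff lmeasurable_ball fmeasurableD[OF Ulm])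
  also have "\<dots> = measure lebesgue (ball (0::(real,'n) vec) 1) - measure lebesgue U"
    by (rule measure_Diff) (use UB Ulm fmeasurableD2[OF lmeasurable_ball] in auto)
  finally show False using d Upos by simp
qed

lemma nn_integral_affine_matrix:
  fixes A :: "((real, 'n::{finite,wellorder}) vec, 'n) vec" and a :: "(real, 'n) vec"
    and f :: "(real, 'n) vec \<Rightarrow> ennreal"
  assumes A: "invertible A" and f[measurable]: "f \<in> borel_measurable borel"
  shows "(\<integral>\<^sup>+x. f x \<partial>lborel) = ennreal \<bar>det A\<bar> * (\<integral>\<^sup>+x. f (A *v x + a) \<partial>lborel)"
proof -
  have Tm[measurable]: "(\<lambda>x. A *v x + a) \<in> borel \<rightarrow>\<^sub>M borel"
    by (intro borel_measurable_continuous_onI continuous_intros)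
  show ?thesis
    by (subst lborel_affine_matrix[OF A, of a])
       (simp add: nn_integral_density nn_integral_distr nn_integral_cmult)
qed

lemma e1_facts: "norm (e1 :: (real, 'n::{finite,wellorder}) vec) = 1" "e1 \<bullet> (e1 :: (real, 'n) vec) = 1"
  unfolding e1_def by (simp_all add: norm_axis_1 inner_axis_axis)

locale radial =
  fixes F :: "real \<Rightarrow> real" and K k :: real
  assumes Fpos: "\<And>t. 0 \<le> t \<Longrightarrow> 0 < F t"
    and Fmono: "\<And>s t. 0 \<le> s \<Longrightarrow> s \<le> t \<Longrightarrow> F t \<le> F s"
    and Fstrict: "\<And>t. 0 < t \<Longrightarrow> F t < F 0"
    and FAS: "\<And>c \<alpha> b. 1 < c \<Longrightarrow> 0 < \<alpha> \<Longrightarrow> 0 \<le> b \<Longrightarrow> \<exists>R>0. b \<le> R * c \<and> \<alpha> * F (R * c - b) < F R"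
    and Fexp: "\<And>t. 0 \<le> t \<Longrightarrow> F t \<le> K * exp (- k * t)"
    and kpos: "0 < k"
begin

lemma Kpos: "0 < K"
  using Fexp[of 0] Fpos[of 0] by simp

lemma Fmeas[measurable]: "(\<lambda>x::'a::real_normed_vector. F (norm x)) \<in> borel_measurable borel"
proof -
  define G where "G t = - F (max 0 t)" for t
  have "mono G" unfolding G_def mono_def using Fmono by (auto simp: max_def)
  then have [measurable]: "G \<in> borel_measurable borel" by (rule borel_measurable_mono)
  have "(\<lambda>x::'a. - G (norm x)) \<in> borel_measurable borel" by measurable
  moreover have "(\<lambda>x::'a. - G (norm x)) = (\<lambda>x. F (norm x))" by (auto simp: G_def)
  ultimately show ?thesis by simp
qed

lemma I_finite: "(\<integral>\<^sup>+x. ennreal (F (norm (x::(real, 'n::{finite,wellorder}) vec))) \<partial>lborel) < \<infinity>"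
proof -
  have "(\<integral>\<^sup>+x. ennreal (F (norm (x::(real, 'n) vec))) \<partial>lborel) \<le> (\<integral>\<^sup>+x. ennreal K * ennreal (exp (- k * norm (x::(real, 'n) vec))) \<partial>lborel)"
    using Fexp Kpos by (intro nn_integral_mono) (simp add: ennreal_mult[symmetric])
  also have "\<dots> = ennreal K * (\<integral>\<^sup>+x. ennreal (exp (- k * norm (x::(real, 'n) vec))) \<partial>lborel)"
    by (rule nn_integral_cmult) measurable
  also have "\<dots> < \<infinity>" using exp_norm_nn_integral_finite[OF kpos, where 'a="(real, 'n) vec"] by (simp add: ennreal_mult_less_top)
  finally show ?thesis .
qed

lemma I_pos: "(\<integral>\<^sup>+x. ennreal (F (norm (x::(real, 'n::{finite,wellorder}) vec))) \<partial>lborel) \<noteq> 0"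
proof
  assume "(\<integral>\<^sup>+x. ennreal (F (norm (x::(real, 'n) vec))) \<partial>lborel) = 0"
  then have "AE x in lborel. ennreal (F (norm (x::(real, 'n) vec))) = 0"
    by (subst (asm) nn_integral_0_iff_AE) measurable
  then have "AE x::(real, 'n) vec in lborel. False"
  proof (rule AE_mp)
    show "AE x in lborel. ennreal (F (norm (x::(real, 'n) vec))) = 0 \<longrightarrow> False"
      using Fpos by (intro AE_I2) (simp add: less_le)
  qed
  then show False using AE_iff_measurable[of UNIV lborel "\<lambda>x::(real, 'n) vec. False"] by simp
qed

lemma I_real: obtains r where "r > 0" "(\<integral>\<^sup>+x. ennreal (F (norm (x::(real, 'n::{finite,wellorder}) vec))) \<partial>lborel) = ennreal r"
proof -
  let ?I = "(\<integral>\<^sup>+x. ennreal (F (norm (x::(real, 'n::{finite,wellorder}) vec))) \<partial>lborel)"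
  have "?I \<noteq> \<infinity>" using I_finite[where 'n='n] by simp
  then obtain r where r: "?I = ennreal r" "0 \<le> r" by (cases ?I) auto
  moreover have "r \<noteq> 0" using I_pos r by auto
  ultimately show ?thesis using that by auto
qed

lemma int_position:
  fixes A :: "((real, 'n::{finite,wellorder}) vec, 'n) vec" and a :: "(real, 'n) vec"
  assumes A: "invertible A" and al: "\<alpha> > 0"
  shows "(\<integral>\<^sup>+x. ennreal (\<alpha> * F (norm (A *v x + a))) \<partial>lborel)
       = ennreal (\<alpha> / \<bar>det A\<bar>) * (\<integral>\<^sup>+x. ennreal (F (norm (x::(real, 'n) vec))) \<partial>lborel)"
proof -
  have Tm[measurable]: "(\<lambda>x. A *v x + a) \<in> borel \<rightarrow>\<^sub>M borel"
    by (intro borel_measurable_continuous_onI continuous_intros)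
  have d: "det A \<noteq> 0" using A by (simp add: invertible_det_nz)
  let ?J = "(\<integral>\<^sup>+x. ennreal (F (norm (A *v x + a))) \<partial>lborel)"
  have I: "(\<integral>\<^sup>+x. ennreal (F (norm (x::(real, 'n) vec))) \<partial>lborel) = ennreal \<bar>det A\<bar> * ?J"
    by (rule nn_integral_affine_matrix[OF A]) measurable
  have em: "ennreal (\<alpha> * F (norm (A *v x + a))) = ennreal \<alpha> * ennreal (F (norm (A *v x + a)))" for x
    using al Fpos[of "norm (A *v x + a)"] by (simp add: ennreal_mult)
  have "(\<integral>\<^sup>+x. ennreal (\<alpha> * F (norm (A *v x + a))) \<partial>lborel) = ennreal \<alpha> * ?J"
    unfolding em by (rule nn_integral_cmult) measurable
  also have "\<dots> = ennreal (\<alpha> / \<bar>det A\<bar>) * (ennreal \<bar>det A\<bar> * ?J)"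
    using d al by (simp add: ennreal_mult[symmetric] mult.assoc[symmetric])
  finally show ?thesis unfolding I .
qed

end

context radial begin

lemma contr:
  fixes A :: "((real, 'n::{finite,wellorder}) vec, 'n) vec" and a :: "(real, 'n) vec"
  assumes al: "\<alpha> > 0"
    and dom: "\<And>x. 0 \<le> x \<bullet> e1 \<Longrightarrow> F (norm x) \<le> \<alpha> * F (norm (A *v x + a))"
  shows "norm (A *v u) \<le> norm u"
proof (rule ccontr)
  assume "\<not> norm (A *v u) \<le> norm u"
  then have u: "norm u < norm (A *v u)" by simp
  have neg: "A *v (- v) = - (A *v v)" for v
    by (metis matrix_vector_mult_scaleR scaleR_minus1_left)
  obtain u' where u': "norm u' < norm (A *v u')" "0 \<le> u' \<bullet> e1"
  proof (cases "0 \<le> u \<bullet> e1")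
    case True then show ?thesis using that u by blast
  next
    case False then show ?thesis using that[of "- u"] u by (simp add: neg)
  qed
  define S where "S = {v. norm v < norm (A *v v)}"
  have "open S" unfolding S_def
    by (intro open_Collect_less continuous_intros)
  moreover have "u' \<in> S" using u' by (simp add: S_def)
  ultimately obtain eps where eps: "eps > 0" "ball u' eps \<subseteq> S" using open_contains_ball by blast
  define w where "w = u' + (eps / 2) *\<^sub>R e1"
  have "dist u' w = eps / 2" using eps e1_facts(1)[where 'n='n] by (simp add: w_def dist_norm)
  then have "w \<in> S" using eps by auto
  then have w: "norm w < norm (A *v w)" by (simp add: S_def)
  have we: "0 < w \<bullet> e1" using u'(2) eps e1_facts(2)[where 'n='n] by (simp add: w_def inner_add_left)
  then have w0: "w \<noteq> 0" by auto
  define c where "c = norm (A *v w) / norm w"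
  have c1: "1 < c" using w w0 by (simp add: c_def)
  obtain R where R: "R > 0" "norm a \<le> R * c" "\<alpha> * F (R * c - norm a) < F R"
    using FAS[OF c1 al norm_ge_zero] by blast
  define x where "x = (R / norm w) *\<^sub>R w"
  have xe: "0 \<le> x \<bullet> e1" using R we w0 by (simp add: x_def)
  have nx: "norm x = R" using R w0 by (simp add: x_def)
  have nAx: "norm (A *v x) = R * c" using R w0
    by (simp add: x_def matrix_vector_mult_scaleR c_def)
  have "R * c - norm a \<le> norm (A *v x + a)"
    using norm_diff_ineq[of "A *v x" a] nAx by simp
  then have "F (norm (A *v x + a)) \<le> F (R * c - norm a)"
    using R by (intro Fmono) auto
  then have "\<alpha> * F (norm (A *v x + a)) \<le> \<alpha> * F (R * c - norm a)"
    using al by simp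
  moreover have "F R \<le> \<alpha> * F (norm (A *v x + a))" using dom[OF xe] nx by simp
  ultimately show False using R by simp
qed

lemma alpha_ge:
  fixes A :: "((real, 'n::{finite,wellorder}) vec, 'n) vec" and a :: "(real, 'n) vec"
  assumes al: "\<alpha> > 0"
    and dom: "\<And>x. 0 \<le> x \<bullet> e1 \<Longrightarrow> F (norm x) \<le> \<alpha> * F (norm (A *v x + a))"
  shows "1 \<le> \<alpha>" and "\<alpha> = 1 \<Longrightarrow> a = 0"
proof -
  have d0: "F 0 \<le> \<alpha> * F (norm a)" using dom[of 0] by simp
  have Fa: "F (norm a) \<le> F 0" using Fmono[of 0 "norm a"] by simp
  have Fa0: "0 < F (norm a)" using Fpos by simp
  show "1 \<le> \<alpha>"
  proof (rule ccontr)
    assume "\<not> 1 \<le> \<alpha>"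
    then have "\<alpha> * F (norm a) < 1 * F (norm a)" using Fa0 by (intro mult_strict_right_mono) auto
    then show False using d0 Fa by simp
  qed
  show "a = 0" if "\<alpha> = 1"
  proof (rule ccontr)
    assume "a \<noteq> 0"
    then have "F (norm a) < F 0" by (intro Fstrict) simp
    then show False using d0 that by simp
  qed
qed

lemma polar_lower:
  fixes t :: real
  assumes t: "0 \<le> t"
  shows "1 / F 0 \<le> polar (\<lambda>x::(real, 'n::{finite,wellorder}) vec. if 0 \<le> x \<bullet> e1 then F (norm x) else 0) (- t *\<^sub>R e1)"
  unfolding polar_def
proof (rule cInf_greatest)
  let ?P = "\<lambda>x::(real, 'n) vec. if 0 \<le> x \<bullet> e1 then F (norm x) else 0"
  have "(0::(real, 'n) vec) \<in> {x. 0 < ?P x}" using Fpos[of 0] by simp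
  then show "(\<lambda>x. exp (- ((- t *\<^sub>R e1) \<bullet> x)) / ?P x) ` {x. 0 < ?P x} \<noteq> {}" by blast
  fix y assume "y \<in> (\<lambda>x. exp (- ((- t *\<^sub>R e1) \<bullet> x)) / ?P x) ` {x. 0 < ?P x}"
  then obtain x where x: "0 < ?P x" "y = exp (- ((- t *\<^sub>R e1) \<bullet> x)) / ?P x" by blast
  then have xe: "0 \<le> x \<bullet> e1" by (auto split: if_splits)
  have y: "y = exp (t * (e1 \<bullet> x)) / F (norm x)" using x xe by simp
  have Fx: "0 < F (norm x)" "F (norm x) \<le> F 0" using Fpos[of "norm x"] Fmono[of 0 "norm x"] by auto
  have "1 \<le> exp (t * (e1 \<bullet> x))" using t xe by (simp add: inner_commute)
  then have "1 / F (norm x) \<le> exp (t * (e1 \<bullet> x)) / F (norm x)" using Fx by (simp add: divide_right_mono)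
  moreover have "1 / F 0 \<le> 1 / F (norm x)" using Fx by (simp add: frac_le)
  ultimately show "1 / F 0 \<le> y" using y by simp
qed

lemma no_dom:
  fixes A :: "((real, 'n::{finite,wellorder}) vec, 'n) vec" and a :: "(real, 'n) vec"
  assumes A: "invertible A" and al: "\<alpha> > 0"
  shows "\<exists>p. \<alpha> * F (norm (A *v p + a)) < polar (\<lambda>x::(real, 'n) vec. if 0 \<le> x \<bullet> e1 then F (norm x) else 0) p"
proof -
  obtain B where AB: "B ** A = mat 1" using A unfolding invertible_def by blast
  define v where "v = A *v e1"
  have v0: "v \<noteq> 0"
  proof
    assume "v = 0"
    then have "B *v (A *v e1) = 0" by (simp add: v_def)
    then have "(e1::(real,'n) vec) = 0" using AB by (simp add: matrix_vector_mul_assoc)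
    then show False using e1_facts(1)[where 'n='n] by simp
  qed
  define s0 where "s0 = \<alpha> * K * F 0 / k"
  have s0: "0 \<le> s0" using al Kpos Fpos[of 0] kpos by (simp add: s0_def)
  define t where "t = (s0 + norm a) / norm v"
  have t: "0 \<le> t" using s0 v0 by (simp add: t_def)
  define p where "p = - t *\<^sub>R (e1::(real, 'n) vec)"
  have "norm (A *v p + a) \<ge> s0"
  proof -
    have "A *v p = - t *\<^sub>R v" unfolding p_def v_def by (rule matrix_vector_mult_scaleR)
    then have "norm (A *v p) = s0 + norm a" using v0 t s0 by (simp add: t_def)
    then show ?thesis using norm_diff_ineq[of "A *v p" a] by simp
  qed
  then have "F (norm (A *v p + a)) \<le> F s0" using s0 by (intro Fmono) auto
  also have "\<dots> \<le> K * exp (- k * s0)" using Fexp s0 by simp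
  also have "\<dots> \<le> K / (1 + k * s0)"
  proof -
    have "1 + k * s0 \<le> exp (k * s0)" by (rule exp_ge_add_one_self)
    moreover have "0 < 1 + k * s0" using kpos s0 by (simp add: add_pos_nonneg)
    ultimately have "1 / exp (k * s0) \<le> 1 / (1 + k * s0)"
      by (intro divide_left_mono) auto
    then have "exp (- k * s0) \<le> 1 / (1 + k * s0)"
      by (simp add: exp_minus inverse_eq_divide)
    then have "K * exp (- k * s0) \<le> K * (1 / (1 + k * s0))"
      by (rule mult_left_mono) (use Kpos in auto)
    then show ?thesis by simp
  qed
  finally have "\<alpha> * F (norm (A *v p + a)) \<le> \<alpha> * (K / (1 + k * s0))" using al by (intro mult_left_mono) auto
  also have "\<dots> < 1 / F 0"
  proof -
    have "k * s0 = \<alpha> * K * F 0" using kpos by (simp add: s0_def)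
    then have "\<alpha> * K * F 0 < 1 + k * s0" by simp
    moreover have "0 < 1 + k * s0" using kpos s0 by (simp add: add_pos_nonneg)
    ultimately show ?thesis using Fpos[of 0] by (simp add: field_simps)
  qed
  also have "\<dots> \<le> polar (\<lambda>x::(real, 'n) vec. if 0 \<le> x \<bullet> e1 then F (norm x) else 0) p"
    unfolding p_def by (rule polar_lower[OF t])
  finally show ?thesis by blast
qed

end

context radial begin

theorem main:
  fixes L Lplus :: "(real, 'n::{finite,wellorder}) vec \<Rightarrow> real"
  assumes LF: "L = (\<lambda>x. F (norm x))"
    and LP: "Lplus = (\<lambda>x. if x \<bullet> e1 \<ge> 0 then L x else 0)"
  shows "is_lowner Lplus L L \<and> (\<forall>g. is_lowner Lplus L g \<longrightarrow> g = L)
       \<and> \<not> (\<exists>g. is_position L g \<and> (\<forall>x. polar Lplus x \<le> g x))"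
proof -
  obtain r where r: "r > 0" "(\<integral>\<^sup>+x. ennreal (F (norm (x::(real, 'n) vec))) \<partial>lborel) = ennreal r"
    using I_real by blast
  have intL: "integral_R L = ennreal r" unfolding integral_R_def LF using r by simp
  have posL: "is_position L L" unfolding is_position_def
    by (rule exI[of _ "mat 1"], rule exI[of _ 1], rule exI[of _ 0])
       (auto simp: invertible_def intro!: exI[of _ "mat 1"])
  have domL: "\<forall>x. Lplus x \<le> L x" unfolding LP LF using Fpos by (auto intro: less_imp_le)
  have key: "\<exists>A \<alpha> a. invertible A \<and> \<alpha> > 0 \<and> g = (\<lambda>x. \<alpha> * F (norm (A *v x + a)))
      \<and> 1 \<le> \<alpha> \<and> \<bar>det A\<bar> \<le> 1 \<and> 0 < \<bar>det A\<bar> \<and> (\<forall>u. norm (A *v u) \<le> norm u) \<and> (\<alpha> = 1 \<longrightarrow> a = 0)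
      \<and> integral_R g = ennreal (\<alpha> / \<bar>det A\<bar> * r)"
    if pg: "is_position L g" and dg: "\<forall>x. Lplus x \<le> g x" for g
  proof -
    obtain A \<alpha> a where A: "invertible A" "\<alpha> > 0" "g = (\<lambda>x. \<alpha> * L (A *v x + a))"
      using pg unfolding is_position_def by blast
    have dom: "F (norm x) \<le> \<alpha> * F (norm (A *v x + a))" if "0 \<le> x \<bullet> e1" for x
      using dg[rule_format, of x] that unfolding LP LF A(3) by simp
    have c: "\<forall>u. norm (A *v u) \<le> norm u" using contr[OF A(2) dom] by blast
    have d0: "0 < \<bar>det A\<bar>" using A(1) by (simp add: invertible_det_nz)
    have "integral_R g = ennreal (\<alpha> / \<bar>det A\<bar>) * ennreal r"
      unfolding integral_R_def A(3) LF using int_position[OF A(1,2), of a] r by simp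
    also have "\<dots> = ennreal (\<alpha> / \<bar>det A\<bar> * r)" using A(2) d0 r by (subst ennreal_mult) auto
    finally have "integral_R g = ennreal (\<alpha> / \<bar>det A\<bar> * r)" .
    then show ?thesis using A c d0 alpha_ge[OF A(2) dom] contraction_det[of A] unfolding LF by blast
  qed
  have P1: "is_lowner Lplus L L"
    unfolding is_lowner_def
  proof (intro conjI allI impI posL domL[rule_format])
    fix g' assume h: "is_position L g' \<and> (\<forall>x. Lplus x \<le> g' x)"
    obtain A :: "((real, 'n) vec, 'n) vec" and \<alpha> where k: "1 \<le> \<alpha>" "\<bar>det A\<bar> \<le> 1" "0 < \<bar>det A\<bar>" "integral_R g' = ennreal (\<alpha> / \<bar>det A\<bar> * r)"
      using key[of g'] h by blast
    have "1 \<le> \<alpha> / \<bar>det A\<bar>" using k by (simp add: le_divide_eq)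
    then have "1 * r \<le> \<alpha> / \<bar>det A\<bar> * r" using r(1) by (intro mult_right_mono) auto
    then show "integral_R L \<le> integral_R g'" unfolding intL k(4) by (simp add: ennreal_leI)
  qed
  have P2: "g = L" if lg: "is_lowner Lplus L g" for g
  proof -
    have pg: "is_position L g" and dg: "\<forall>x. Lplus x \<le> g x" and le: "integral_R g \<le> integral_R L"
      using lg posL domL unfolding is_lowner_def by blast+
    obtain A \<alpha> a where k: "invertible A" "\<alpha> > 0" "g = (\<lambda>x. \<alpha> * F (norm (A *v x + a)))"
      "1 \<le> \<alpha>" "\<bar>det A\<bar> \<le> 1" "0 < \<bar>det A\<bar>" "\<forall>u. norm (A *v u) \<le> norm u" "\<alpha> = 1 \<longrightarrow> a = 0"
      "integral_R g = ennreal (\<alpha> / \<bar>det A\<bar> * r)"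
      using key[OF pg dg] by blast
    have "\<alpha> / \<bar>det A\<bar> * r \<le> r" using le unfolding k(9) intL using r by (simp add: ennreal_le_iff)
    then have "\<alpha> / \<bar>det A\<bar> * r \<le> 1 * r" by simp
    then have "\<alpha> / \<bar>det A\<bar> \<le> 1" using r(1) mult_le_cancel_right_pos by blast
    then have "\<alpha> \<le> \<bar>det A\<bar>" using k(6) by (simp add: divide_le_eq)
    then have a1: "\<alpha> = 1" and d1: "\<bar>det A\<bar> = 1" using k(4,5) by auto
    have a0: "a = 0" using k(8) a1 by simp
    have iso: "norm (A *v u) = norm u" for u
      using contraction_det_isometry[OF _ k(1) d1] k(7) by blast
    show "g = L" unfolding k(3) LF a1 a0 using iso by simp
  qed
  have P3: "\<not> (\<exists>g. is_position L g \<and> (\<forall>x. polar Lplus x \<le> g x))"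
  proof
    assume "\<exists>g. is_position L g \<and> (\<forall>x. polar Lplus x \<le> g x)"
    then obtain g A \<alpha> a where A: "invertible A" "\<alpha> > 0" "g = (\<lambda>x. \<alpha> * L (A *v x + a))"
      and dg: "\<forall>x. polar Lplus x \<le> g x"
      unfolding is_position_def by blast
    obtain p where p: "\<alpha> * F (norm (A *v p + a)) < polar (\<lambda>x::(real, 'n) vec. if 0 \<le> x \<bullet> e1 then F (norm x) else 0) p"
      using no_dom[OF A(1,2)] by blast
    have "polar Lplus p \<le> g p" using dg by blast
    then show False using p unfolding A(3) LP LF by simp
  qed
  show ?thesis using P1 P2 P3 by blast
qed

end

lemma radial_exp:
  fixes p :: real
  assumes p: "1 \<le> p"
  shows "radial (\<lambda>t. exp (- (t powr p))) (exp 1) 1"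
proof
  fix t :: real assume "0 \<le> t" then show "0 < exp (- (t powr p))" by simp
next
  fix s t :: real assume st: "0 \<le> s" "s \<le> t"
  then have "s powr p \<le> t powr p" using p by (intro powr_mono2) auto
  then show "exp (- (t powr p)) \<le> exp (- (s powr p))" by simp
next
  fix t :: real assume "0 < t"
  then have "0 < t powr p" by simp
  then show "exp (- (t powr p)) < exp (- (0 powr p))" by simp
next
  fix t :: real assume t: "0 \<le> t"
  have "t - 1 \<le> t powr p"
  proof (cases "1 \<le> t")
    case True
    then have "t powr 1 \<le> t powr p" using p by (intro powr_mono) auto
    then show ?thesis using True by simp
  next
    case False then show ?thesis by (smt (verit) powr_ge_zero)
  qed
  then have "exp (- (t powr p)) \<le> exp (1 + - 1 * t)" by simp
  then show "exp (- (t powr p)) \<le> exp 1 * exp (- 1 * t)" by (simp add: exp_add[symmetric])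
next
  show "(0::real) < 1" by simp
next
  fix c \<alpha> b :: real assume c: "1 < c" and al: "0 < \<alpha>" and b: "0 \<le> b"
  define c' where "c' = (1 + c) / 2"
  have c'1: "1 < c'" using c by (simp add: c'_def)
  define R where "R = max 1 (max (2 * b / (c - 1)) (2 * \<bar>ln \<alpha>\<bar> / (c - 1) + 1))"
  have R1: "1 \<le> R" by (simp add: R_def)
  have Rb: "2 * b / (c - 1) \<le> R" by (simp add: R_def)
  have Rl: "2 * \<bar>ln \<alpha>\<bar> / (c - 1) < R" by (simp add: R_def)
  have bR: "b \<le> R * (c - 1) / 2" using Rb c by (simp add: field_simps)
  have lR: "\<bar>ln \<alpha>\<bar> < R * (c - 1) / 2" using Rl c by (simp add: field_simps)
  have Rc': "R * c' \<le> R * c - b" using bR by (simp add: c'_def field_simps)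
  have bRc: "b \<le> R * c" using Rc' R1 c'1 by (smt (verit) mult_nonneg_nonneg)
  have "(R * c') powr p \<le> (R * c - b) powr p"
    using Rc' R1 c'1 p by (intro powr_mono2) auto
  moreover have "(R * c') powr p = R powr p * c' powr p" using R1 c'1 by (simp add: powr_mult)
  moreover have "c' \<le> c' powr p" using c'1 p powr_mono[of 1 p c'] by simp
  moreover have "R \<le> R powr p" using R1 p powr_mono[of 1 p R] by simp
  ultimately have "R powr p * c' \<le> (R * c - b) powr p"
    by (smt (verit) R1 mult_left_mono powr_ge_zero)
  moreover have "R powr p * c' - R powr p \<ge> R * (c' - 1)"
  proof -
    have "R powr p * (c' - 1) \<ge> R * (c' - 1)" using \<open>R \<le> R powr p\<close> c'1 by (intro mult_right_mono) auto
    then show ?thesis by (simp add: algebra_simps)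
  qed
  moreover have "R * (c' - 1) = R * (c - 1) / 2" by (simp add: c'_def field_simps)
  ultimately have key: "ln \<alpha> + R powr p < (R * c - b) powr p" using lR by linarith
  have "\<alpha> * exp (- ((R * c - b) powr p)) = exp (ln \<alpha> - (R * c - b) powr p)"
    using al by (simp add: exp_diff exp_minus field_simps)
  also have "\<dots> < exp (- (R powr p))" using key by simp
  finally show "\<exists>R>0. b \<le> R * c \<and> \<alpha> * exp (- ((R * c - b) powr p)) < exp (- (R powr p))"
    using R1 bRc by (intro exI[of _ R]) auto
qed

definition Gs :: "real \<Rightarrow> real \<Rightarrow> real \<Rightarrow> real" where
  "Gs s t \<rho> = exp (- t * \<rho>) / (sqrt (1 - \<rho>\<^sup>2) powr s)"

definition psi :: "real \<Rightarrow> real \<Rightarrow> real" where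
  "psi s t = Inf (Gs s t ` {0..<1})"

lemma D_pos: "0 \<le> \<rho> \<Longrightarrow> \<rho> < 1 \<Longrightarrow> 0 < sqrt (1 - \<rho>\<^sup>2) powr s"
proof -
  assume "0 \<le> \<rho>" "\<rho> < 1"
  then have "\<rho>\<^sup>2 < 1" by (simp add: power_less_one_iff abs_square_less_1)
  then show ?thesis by simp
qed

lemma D_le1: "0 \<le> \<rho> \<Longrightarrow> \<rho> < 1 \<Longrightarrow> 0 \<le> s \<Longrightarrow> sqrt (1 - \<rho>\<^sup>2) powr s \<le> 1"
proof -
  assume a: "0 \<le> \<rho>" "\<rho> < 1" "0 \<le> s"
  then have "\<rho>\<^sup>2 < 1" by (simp add: abs_square_less_1)
  moreover have "sqrt (1 - \<rho>\<^sup>2) \<le> 1" using a by simp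
  ultimately show ?thesis using a by (intro powr_le1) auto
qed

lemma Gs_nonneg: "0 \<le> Gs s t \<rho>"
  by (simp add: Gs_def)

lemma bdd_Gs: "bdd_below (Gs s t ` A)"
  by (rule bdd_belowI[of _ 0]) (auto simp: Gs_nonneg)

lemma psi_upper: "0 \<le> \<rho> \<Longrightarrow> \<rho> < 1 \<Longrightarrow> psi s t \<le> Gs s t \<rho>"
  unfolding psi_def by (rule cInf_lower) (auto simp: bdd_Gs)

lemma psi_greatest: "(\<And>\<rho>. 0 \<le> \<rho> \<Longrightarrow> \<rho> < 1 \<Longrightarrow> y \<le> Gs s t \<rho>) \<Longrightarrow> y \<le> psi s t"
  unfolding psi_def by (rule cInf_greatest) auto

lemma psi_lower: "0 \<le> t \<Longrightarrow> 0 \<le> s \<Longrightarrow> exp (- t) \<le> psi s t"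
proof (rule psi_greatest)
  fix \<rho> :: real assume t: "0 \<le> t" and s: "0 \<le> s" and r: "0 \<le> \<rho>" "\<rho> < 1"
  have "exp (- t) \<le> exp (- t * \<rho>)" using t r by (simp add: mult_left_le)
  also have "\<dots> \<le> exp (- t * \<rho>) / (sqrt (1 - \<rho>\<^sup>2) powr s)"
    using D_pos[OF r, of s] D_le1[OF r s] by (simp add: le_divide_eq)
  finally show "exp (- t) \<le> Gs s t \<rho>" by (simp add: Gs_def)
qed

lemma psi0: "0 \<le> s \<Longrightarrow> 1 \<le> psi s 0"
  using psi_lower[of 0 s] by simp

lemma psi_lt1:
  assumes s: "0 < s" and t: "0 < t"
  shows "psi s t < 1"
proof -
  define \<rho> where "\<rho> = min (1/2) (t / (2 * s))"
  have r0: "0 < \<rho>" using s t by (simp add: \<rho>_def)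
  have r2: "\<rho> \<le> 1/2" by (simp add: \<rho>_def)
  have rt: "s * \<rho> < t" using s t by (simp add: \<rho>_def min_def field_simps)
  have "\<rho>\<^sup>2 \<le> (1/2)\<^sup>2" using r0 r2 by (intro power_mono) auto
  then have rr: "\<rho>\<^sup>2 \<le> 1/4" by (simp add: power2_eq_square)
  have "- \<rho>\<^sup>2 - 2 * (\<rho>\<^sup>2)\<^sup>2 \<le> ln (1 - \<rho>\<^sup>2)"
    by (rule ln_one_minus_pos_lower_bound) (use rr in auto)
  moreover have "2 * (\<rho>\<^sup>2)\<^sup>2 \<le> \<rho>\<^sup>2"
  proof -
    have "(\<rho>\<^sup>2)\<^sup>2 = \<rho>\<^sup>2 * \<rho>\<^sup>2" by (simp add: power2_eq_square)
    also have "\<dots> \<le> \<rho>\<^sup>2 * (1/4)" using rr by (intro mult_left_mono) auto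
    finally have h: "(\<rho>\<^sup>2)\<^sup>2 \<le> \<rho>\<^sup>2 * (1/4)" .
    have h0: "0 \<le> (\<rho>\<^sup>2)\<^sup>2" by (rule zero_le_power2)
    show ?thesis using h h0 by linarith
  qed
  ultimately have ln1: "- 2 * \<rho>\<^sup>2 \<le> ln (1 - \<rho>\<^sup>2)" by simp
  have pos: "0 < 1 - \<rho>\<^sup>2" using rr by simp
  have D: "sqrt (1 - \<rho>\<^sup>2) powr s = exp (s / 2 * ln (1 - \<rho>\<^sup>2))"
    using pos by (simp add: powr_def ln_sqrt)
  have "- t * \<rho> < s / 2 * ln (1 - \<rho>\<^sup>2)"
  proof -
    have "- t * \<rho> < - s * \<rho> * \<rho>" using rt r0 by (simp add: mult_strict_right_mono)
    also have "- s * \<rho> * \<rho> = s / 2 * (- 2 * \<rho>\<^sup>2)" by (simp add: power2_eq_square)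
    also have "\<dots> \<le> s / 2 * ln (1 - \<rho>\<^sup>2)" using ln1 s by (intro mult_left_mono) auto
    finally show ?thesis .
  qed
  then have "Gs s t \<rho> < 1" unfolding Gs_def D by simp
  moreover have "psi s t \<le> Gs s t \<rho>" using r0 r2 by (intro psi_upper) auto
  ultimately show ?thesis by simp
qed

lemma radial_psi:
  assumes s: "0 < s"
  shows "radial (psi s) (1 / (sqrt (1 - (1/2)\<^sup>2) powr s)) (1/2)"
proof
  fix t :: real assume "0 \<le> t" then show "0 < psi s t"
    using psi_lower[of t s] s by (smt (verit) exp_gt_zero)
next
  fix s' t :: real assume st: "0 \<le> s'" "s' \<le> t"
  show "psi s t \<le> psi s s'"
  proof (rule psi_greatest)
    fix \<rho> :: real assume r: "0 \<le> \<rho>" "\<rho> < 1"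
    have "psi s t \<le> Gs s t \<rho>" by (rule psi_upper[OF r])
    also have "\<dots> \<le> Gs s s' \<rho>" unfolding Gs_def using st r D_pos[OF r, of s]
      by (auto intro!: divide_right_mono simp: mult_right_mono)
    finally show "psi s t \<le> Gs s s' \<rho>" .
  qed
next
  fix t :: real assume "0 < t" then show "psi s t < psi s 0"
    using psi_lt1[OF s] psi0[of s] s by force
next
  fix t :: real assume t: "0 \<le> t"
  have "psi s t \<le> Gs s t (1/2)" by (rule psi_upper) auto
  then show "psi s t \<le> 1 / (sqrt (1 - (1/2)\<^sup>2) powr s) * exp (- (1/2) * t)"
    by (simp add: Gs_def mult.commute)
next
  show "(0::real) < 1/2" by simp
next
  fix c \<alpha> b :: real assume c: "1 < c" and al: "0 < \<alpha>" and b: "0 \<le> b"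
  define \<rho> where "\<rho> = (1 + 1 / c) / 2"
  have r0: "0 \<le> \<rho>" and r1: "\<rho> < 1" using c by (auto simp: \<rho>_def field_simps)
  have cr: "1 < c * \<rho>" using c by (simp add: \<rho>_def field_simps)
  define Kr where "Kr = 1 / (sqrt (1 - \<rho>\<^sup>2) powr s)"
  have Kr: "0 < Kr" using D_pos[OF r0 r1, of s] by (simp add: Kr_def)
  define M where "M = \<bar>ln (\<alpha> * Kr)\<bar> + b + 1"
  define R where "R = max (b / c) (M / (c * \<rho> - 1)) + 1"
  have Rbc: "b / c < R" by (simp add: R_def)
  have RM: "M / (c * \<rho> - 1) < R" by (simp add: R_def)
  have R0: "0 < R" using Rbc b c by (smt (verit) divide_nonneg_pos)
  have bRc: "b \<le> R * c" using Rbc c by (simp add: field_simps)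
  have MR: "M < R * (c * \<rho> - 1)" using RM cr by (simp add: field_simps)
  have br: "b * \<rho> \<le> b" using b r1 r0 by (simp add: mult_left_le)
  have key: "ln (\<alpha> * Kr) - (R * c - b) * \<rho> < - R"
  proof -
    have "ln (\<alpha> * Kr) - (R * c - b) * \<rho> = ln (\<alpha> * Kr) + b * \<rho> - R * (c * \<rho> - 1) - R"
      by (simp add: algebra_simps)
    also have "\<dots> < - R" using MR br abs_ge_self[of "ln (\<alpha> * Kr)"] unfolding M_def by linarith
    finally show ?thesis .
  qed
  have "psi s (R * c - b) \<le> Gs s (R * c - b) \<rho>" by (rule psi_upper[OF r0 r1])
  also have "\<dots> = Kr * exp (- (R * c - b) * \<rho>)" by (simp add: Gs_def Kr_def)
  finally have "\<alpha> * psi s (R * c - b) \<le> \<alpha> * (Kr * exp (- (R * c - b) * \<rho>))"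
    using al by (intro mult_left_mono) auto
  also have "\<dots> = exp (ln (\<alpha> * Kr) - (R * c - b) * \<rho>)"
  proof -
    have "exp (ln (\<alpha> * Kr) - (R * c - b) * \<rho>) = exp (ln (\<alpha> * Kr)) * exp (- (R * c - b) * \<rho>)"
      by (simp add: exp_add[symmetric] algebra_simps)
    also have "exp (ln (\<alpha> * Kr)) = \<alpha> * Kr" using al Kr by simp
    finally show ?thesis by simp
  qed
  also have "\<dots> < exp (- R)" using key by simp
  also have "\<dots> \<le> psi s R" using psi_lower[of R s] R0 s by simp
  finally show "\<exists>R>0. b \<le> R * c \<and> \<alpha> * psi s (R * c - b) < psi s R"
    using R0 bRc by blast
qed

lemma hbar_pos_iff: "0 < s \<Longrightarrow> (0 < hbar x powr s) \<longleftrightarrow> norm x < 1"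
proof -
  assume s: "0 < s"
  have "0 < hbar x \<longleftrightarrow> norm x < 1"
  proof
    assume "0 < hbar x"
    then have "norm x \<le> 1" "0 < 1 - (norm x)\<^sup>2" by (auto simp: hbar_def split: if_splits)
    then show "norm x < 1" by (smt (verit) one_le_power)
  next
    assume "norm x < 1"
    then have "(norm x)\<^sup>2 < 1" by (simp add: abs_square_less_1)
    then show "0 < hbar x" using \<open>norm x < 1\<close> by (simp add: hbar_def)
  qed
  moreover have "0 \<le> hbar x" by (auto simp: hbar_def intro!: power_le_one)
  ultimately show ?thesis by (auto simp: less_le)
qed

lemma polar_hbar:
  fixes s :: real assumes s: "0 < s"
  shows "polar (\<lambda>x::(real, 'n::{finite,wellorder}) vec. hbar x powr s) = (\<lambda>p. psi s (norm p))"
proof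
  fix p :: "(real, 'n) vec"
  let ?E = "\<lambda>x::(real, 'n) vec. exp (- (p \<bullet> x)) / (hbar x powr s)"
  let ?S = "{x::(real, 'n) vec. 0 < hbar x powr s}"
  have S: "?S = {x. norm x < 1}" using hbar_pos_iff[OF s] by auto
  have hb: "hbar x powr s = sqrt (1 - (norm x)\<^sup>2) powr s" if "norm x < 1" for x :: "(real, 'n) vec"
    using that by (simp add: hbar_def)
  have bdd: "bdd_below (?E ` ?S)" by (rule bdd_belowI[of _ 0]) auto
  have ne: "?E ` ?S \<noteq> {}" unfolding S by (auto intro!: exI[of _ 0])
  show "polar (\<lambda>x. hbar x powr s) p = psi s (norm p)"
    unfolding polar_def
  proof (rule antisym)
    show "Inf (?E ` ?S) \<le> psi s (norm p)"
    proof (rule psi_greatest)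
      fix \<rho> :: real assume r: "0 \<le> \<rho>" "\<rho> < 1"
      define x where "x = (if p = 0 then \<rho> *\<^sub>R (e1::(real, 'n) vec) else (\<rho> / norm p) *\<^sub>R p)"
      have nx: "norm x = \<rho>" using r e1_facts(1)[where 'n='n] by (auto simp: x_def)
      have px: "p \<bullet> x = norm p * \<rho>"
        by (auto simp: x_def power2_norm_eq_inner[symmetric] power2_eq_square)
      have xS: "x \<in> ?S" unfolding S using nx r by simp
      have "Inf (?E ` ?S) \<le> ?E x" by (rule cInf_lower) (use xS bdd in auto)
      also have "?E x = Gs s (norm p) \<rho>" using nx px r hb[of x] by (simp add: Gs_def)
      finally show "Inf (?E ` ?S) \<le> Gs s (norm p) \<rho>" .
    qed
  next
    show "psi s (norm p) \<le> Inf (?E ` ?S)"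
    proof (rule cInf_greatest[OF ne])
      fix y assume "y \<in> ?E ` ?S"
      then obtain x where x: "norm x < 1" "y = ?E x" unfolding S by auto
      have "psi s (norm p) \<le> Gs s (norm p) (norm x)" by (rule psi_upper) (use x in auto)
      also have "\<dots> \<le> ?E x"
        unfolding Gs_def hb[OF x(1)]
        using D_pos[of "norm x" s] x(1) norm_cauchy_schwarz[of p x]
        by (intro divide_right_mono) auto
      finally show "psi s (norm p) \<le> y" using x by simp
    qed
  qed
qed

theorem lemma6p1:
  fixes L :: "real ^ 'n::{finite,wellorder} \<Rightarrow> real"
  assumes "(\<exists>p::real. p \<ge> 1 \<and> L = (\<lambda>x. exp (- (norm x powr p))))
         \<or> (\<exists>s::real. s > 0 \<and> L = polar (\<lambda>x. hbar x powr s))"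
  defines "Lplus \<equiv> (\<lambda>x. if x \<bullet> e1 \<ge> 0 then L x else 0)"
  shows "is_lowner Lplus L L \<and> (\<forall>g. is_lowner Lplus L g \<longrightarrow> g = L)
       \<and> \<not> (\<exists>g. is_position L g \<and> (\<forall>x. polar Lplus x \<le> g x))"
  using assms(1)
proof
  assume "\<exists>p::real. p \<ge> 1 \<and> L = (\<lambda>x. exp (- (norm x powr p)))"
  then obtain p :: real where p: "1 \<le> p" "L = (\<lambda>x. exp (- (norm x powr p)))" by blast
  show ?thesis
    by (rule radial.main[OF radial_exp[OF p(1)]]) (use p(2) Lplus_def in auto)
next
  assume "\<exists>s::real. s > 0 \<and> L = polar (\<lambda>x. hbar x powr s)"
  then obtain s :: real where s: "0 < s" "L = polar (\<lambda>x. hbar x powr s)" by blast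
  have L: "L = (\<lambda>x. psi s (norm x))" using s polar_hbar[OF s(1)] by simp
  show ?thesis
    by (rule radial.main[OF radial_psi[OF s(1)]]) (use L Lplus_def in auto)
qed


end
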